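(* Let $p=\tfrac12$, $\mu=\mu_{1/2}$, and set $d_0=E_0$, $d_n=E_n-E_{n-1}$ for $n\ge1$. Then for every $m\ge0$, $$K_m=(2-2^{-m})d_0+\sum_{n=1}^m2^{-(n-1)}\big(1-2^{-(m-n+1)}\big)d_n.$$ In particular each subspace $\mathcal D_0=E_0L^2(\mu)=\mathrm{span}\{\phi\}$, $\mathcal D_n=d_nL^2(\mu)$ ($n\ge1$) is $K_m$-invariant, $K_m$ acts on $\mathcal D_n$ as multiplication by $\lambda_{n,m}$, where $\lambda_{0,m}=2-2^{-m}$ and $\lambda_{n,m}=2^{-(n-1)}(1-2^{-(m-n+1)})$ for $1\le n\le m$, and $K_m$ vanishes on $\mathcal D_n$ for $n\ge m+1$.
   Context: Let $S_0(x)=x/3$, $S_2(x)=(x+2)/3$ on $[0,1]$ and let $C$ be the middle-third Cantor set. $\mu=\mu_{1/2}$ is the unique Borel probability measure on $[0,1]$ with $\mu=\frac12\mu\circ S_0^{-1}+\frac12\mu\circ S_2^{-1}$. For words $w\in\{0,2\}^n$, $S_w=S_{w_1}\circ\cdots\circ S_{w_n}$, $C_w=S_w(C)$. $\phi=1_C$. Inner product $\langle f,g\rangle=\int\overline fg\,d\mu$. $K_mf=\sum_{|u|\le m}\langle1_{C_u},f\rangle1_{C_u}$, and $E_n$ is the conditional expectation onto the $\sigma$-algebra generated by $\{C_w:|w|=n\}$. *)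

theory Defs
  imports "HOL-Probability.Probability"
begin

definition Smap :: "nat \<Rightarrow> real \<Rightarrow> real" where
  "Smap d x = (x + real d) / 3"

fun Sw :: "nat list \<Rightarrow> real \<Rightarrow> real" where
  "Sw [] = id"
| "Sw (a # w) = Smap a \<circ> Sw w"

definition words :: "nat \<Rightarrow> nat list set" where
  "words n = {w. length w = n \<and> set w \<subseteq> {0, 2}}"

definition cantor :: "real set" where
  "cantor = (\<Inter>n. \<Union>w\<in>words n. Sw w ` {0..1})"

definition Cw :: "nat list \<Rightarrow> real set" where
  "Cw w = Sw w ` cantor"

definition phi :: "real \<Rightarrow> complex" where
  "phi x = indicator cantor x"

definition inner_mu :: "real measure \<Rightarrow> (real \<Rightarrow> complex) \<Rightarrow> (real \<Rightarrow> complex) \<Rightarrow> complex" where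
  "inner_mu M f g = (\<integral>x. cnj (f x) * g x \<partial>M)"

definition L2 :: "real measure \<Rightarrow> (real \<Rightarrow> complex) set" where
  "L2 M = {f. f \<in> borel_measurable M \<and> integrable M (\<lambda>x. (cmod (f x))\<^sup>2)}"

definition Kop :: "real measure \<Rightarrow> nat \<Rightarrow> (real \<Rightarrow> complex) \<Rightarrow> (real \<Rightarrow> complex)" where
  "Kop M m f = (\<lambda>x. \<Sum>u\<in>(\<Union>k\<le>m. words k).
      inner_mu M (\<lambda>y. indicator (Cw u) y) f * indicator (Cw u) x)"

definition Fn :: "real measure \<Rightarrow> nat \<Rightarrow> real measure" where
  "Fn M n = sigma (space M) (Cw ` words n)"

definition En :: "real measure \<Rightarrow> nat \<Rightarrow> (real \<Rightarrow> complex) \<Rightarrow> (real \<Rightarrow> complex)" where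
  "En M n f = (\<lambda>x. complex_of_real (real_cond_exp M (Fn M n) (\<lambda>y. Re (f y)) x)
                 + \<i> * complex_of_real (real_cond_exp M (Fn M n) (\<lambda>y. Im (f y)) x))"

definition dn :: "real measure \<Rightarrow> nat \<Rightarrow> (real \<Rightarrow> complex) \<Rightarrow> (real \<Rightarrow> complex)" where
  "dn M n f = (if n = 0 then En M 0 f else (\<lambda>x. En M n f x - En M (n - 1) f x))"

definition lam :: "nat \<Rightarrow> nat \<Rightarrow> real" where
  "lam n m = (if n = 0 then 2 - (1/2)^m
              else if n \<le> m then (1/2)^(n-1) * (1 - (1/2)^(m - n + 1)) else 0)"

end

theory Submission
  imports Defs
begin

definition Tn :: "nat \<Rightarrow> real set" where
  "Tn n = (\<Union>w\<in>words n. Sw w ` {0..1})"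

lemma words_0: "words 0 = {[]}" by (auto simp: words_def)

lemma words_Suc: "words (Suc n) = (\<lambda>(a,w). a # w) ` ({0,2} \<times> words n)"
proof
  show "words (Suc n) \<subseteq> (\<lambda>(a,w). a # w) ` ({0,2} \<times> words n)"
  proof
    fix w assume "w \<in> words (Suc n)"
    then obtain a v where "w = a # v" "a \<in> {0,2}" "v \<in> words n"
      by (cases w) (auto simp: words_def)
    then show "w \<in> (\<lambda>(a,w). a # w) ` ({0,2} \<times> words n)" by force
  qed
qed (auto simp: words_def)

lemma finite_words: "finite (words n)"
  by (induction n) (auto simp: words_0 words_Suc)

lemma Cons_words: "a \<in> {0,2} \<Longrightarrow> w \<in> words n \<Longrightarrow> a # w \<in> words (Suc n)"
  by (auto simp: words_def)

lemma snoc_words: "a \<in> {0,2} \<Longrightarrow> w \<in> words n \<Longrightarrow> w @ [a] \<in> words (Suc n)"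
  by (auto simp: words_def)

lemma inj_Smap: "inj (Smap a)"
  by (auto simp: inj_def Smap_def)

lemma Smap_unit: "a \<in> {0,2} \<Longrightarrow> Smap a ` {0..1} \<subseteq> {0..1}"
  by (auto simp: Smap_def)

lemma Smap0_unit: "x \<in> {0..1} \<Longrightarrow> Smap 0 x \<le> 1/3"
  by (auto simp: Smap_def)

lemma Smap2_unit: "x \<in> {0..1} \<Longrightarrow> Smap 2 x \<ge> 2/3"
  by (auto simp: Smap_def)

lemma Sw_unit: "set w \<subseteq> {0,2} \<Longrightarrow> Sw w ` {0..1} \<subseteq> {0..1}"
proof (induction w)
  case (Cons a w)
  then have "Sw (a # w) ` {0..1} = Smap a ` (Sw w ` {0..1})" by (simp add: image_comp)
  also have "\<dots> \<subseteq> Smap a ` {0..1}" using Cons by (intro image_mono) auto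
  also have "\<dots> \<subseteq> {0..1}" using Cons by (intro Smap_unit) auto
  finally show ?case .
qed simp

lemma Tn_0: "Tn 0 = {0..1}" by (simp add: Tn_def words_0)

lemma Tn_Suc: "Tn (Suc n) = Smap 0 ` Tn n \<union> Smap 2 ` Tn n"
  unfolding Tn_def words_Suc by (auto simp: image_comp image_UN)

lemma Tn_unit: "Tn n \<subseteq> {0..1}"
  using Sw_unit by (auto simp: Tn_def words_def)

lemma cont_Smap: "continuous_on S (Smap a)"
  unfolding Smap_def by (intro continuous_intros) auto

lemma cont_Sw: "continuous_on S (Sw w)"
proof (induction w arbitrary: S)
  case Nil then show ?case by (simp add: continuous_on_id)
next
  case (Cons a w)
  have "continuous_on S (Smap a \<circ> Sw w)" by (rule continuous_on_compose[OF Cons.IH cont_Smap])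
  then show ?case by simp
qed

lemma compact_Tn: "compact (Tn n)"
  unfolding Tn_def using finite_words
  by (intro compact_UN) (auto intro!: compact_continuous_image cont_Sw)

lemma cantor_unit: "cantor \<subseteq> {0..1}"
  using Tn_0 unfolding cantor_def Tn_def[symmetric] by auto

lemma cantor_eq: "cantor = (\<Inter>n. Tn n)" unfolding cantor_def Tn_def ..

lemma compact_cantor: "compact cantor"
proof -
  have "closed cantor" unfolding cantor_eq using compact_Tn
    by (intro closed_INT) (auto intro: compact_imp_closed)
  moreover have "bounded cantor" using cantor_unit bounded_subset[of "{0..1::real}"] by auto
  ultimately show ?thesis using compact_eq_bounded_closed by blast
qed

lemma cantor_self: "cantor = Smap 0 ` cantor \<union> Smap 2 ` cantor"
proof
  show "Smap 0 ` cantor \<union> Smap 2 ` cantor \<subseteq> cantor"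
  proof
    fix x assume "x \<in> Smap 0 ` cantor \<union> Smap 2 ` cantor"
    then obtain a y where a: "a \<in> {0,2}" and y: "y \<in> cantor" and x: "x = Smap a y" by auto
    show "x \<in> cantor" unfolding cantor_eq
    proof
      fix n show "x \<in> Tn n"
      proof (cases n)
        case 0
        have "y \<in> {0..1}" using cantor_unit y by auto
        then have "Smap a y \<in> {0..1}" using Smap_unit[OF a] by blast
        then show ?thesis using 0 x by (simp add: Tn_0)
      next
        case (Suc m)
        have "y \<in> Tn m" using y cantor_eq by auto
        then show ?thesis using Suc a x Tn_Suc by auto
      qed
    qed
  qed
next
  show "cantor \<subseteq> Smap 0 ` cantor \<union> Smap 2 ` cantor"
  proof
    fix x assume x: "x \<in> cantor"
    then have "x \<in> Tn 1" using cantor_eq by auto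
    then have "x \<in> Smap 0 ` {0..1} \<or> x \<in> Smap 2 ` {0..1}" by (simp add: Tn_Suc Tn_0)
    then show "x \<in> Smap 0 ` cantor \<union> Smap 2 ` cantor"
    proof
      assume h: "x \<in> Smap 0 ` {0..1}"
      then have xl: "x \<le> 1/3" using Smap0_unit by auto
      have "x \<in> Smap 0 ` cantor"
      proof
        show "x = Smap 0 (3*x)" by (simp add: Smap_def)
        show "3 * x \<in> cantor" unfolding cantor_eq
        proof
          fix n
          have "x \<in> Tn (Suc n)" using x cantor_eq by auto
          moreover have "x \<notin> Smap 2 ` Tn n" using xl Smap2_unit Tn_unit by fastforce
          ultimately have "x \<in> Smap 0 ` Tn n" by (simp add: Tn_Suc)
          then obtain z where z: "z \<in> Tn n" "x = Smap 0 z" by auto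
          then have "3 * x = z" by (simp add: Smap_def)
          then show "3 * x \<in> Tn n" using z by simp
        qed
      qed
      then show ?thesis by auto
    next
      assume h: "x \<in> Smap 2 ` {0..1}"
      then have xl: "x \<ge> 2/3" using Smap2_unit by auto
      have "x \<in> Smap 2 ` cantor"
      proof
        show "x = Smap 2 (3*x - 2)" by (simp add: Smap_def)
        show "3 * x - 2 \<in> cantor" unfolding cantor_eq
        proof
          fix n
          have "x \<in> Tn (Suc n)" using x cantor_eq by auto
          moreover have "x \<notin> Smap 0 ` Tn n" using xl Smap0_unit Tn_unit by fastforce
          ultimately have "x \<in> Smap 2 ` Tn n" by (simp add: Tn_Suc)
          then obtain z where z: "z \<in> Tn n" "x = Smap 2 z" by auto
          then have "3 * x - 2 = z" by (simp add: Smap_def)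
          then show "3 * x - 2 \<in> Tn n" using z by simp
        qed
      qed
      then show ?thesis by auto
    qed
  qed
qed

lemma Cw_Nil: "Cw [] = cantor" by (simp add: Cw_def)

lemma Cw_Cons: "Cw (a # w) = Smap a ` Cw w" by (simp add: Cw_def image_comp)

lemma Sw_snoc: "Sw (w @ [a]) = Sw w \<circ> Smap a"
  by (induction w) auto

lemma Cw_snoc: "Cw w = Cw (w @ [0]) \<union> Cw (w @ [2])"
proof -
  have "Cw w = Sw w ` (Smap 0 ` cantor \<union> Smap 2 ` cantor)"
    using cantor_self Cw_def by metis
  then show ?thesis by (simp add: Cw_def Sw_snoc image_comp image_Un)
qed

lemma Cw_unit: "set w \<subseteq> {0,2} \<Longrightarrow> Cw w \<subseteq> {0..1}"
  using Sw_unit[of w] cantor_unit by (auto simp: Cw_def)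

lemma compact_Cw: "compact (Cw w)"
  unfolding Cw_def by (intro compact_continuous_image cont_Sw compact_cantor)

lemma borel_Cw: "Cw w \<in> sets borel"
  using compact_Cw by (intro borel_closed compact_imp_closed)

lemma borel_cantor: "cantor \<in> sets borel"
  using compact_cantor by (intro borel_closed compact_imp_closed)

lemma Cw_disj: "u \<in> words n \<Longrightarrow> v \<in> words n \<Longrightarrow> u \<noteq> v \<Longrightarrow> Cw u \<inter> Cw v = {}"
proof (induction n arbitrary: u v)
  case 0 then show ?case by (simp add: words_0)
next
  case (Suc n)
  from Suc.prems obtain a u' b v' where u: "u = a # u'" "a \<in> {0,2}" "u' \<in> words n"
    and v: "v = b # v'" "b \<in> {0,2}" "v' \<in> words n" by (auto simp: words_Suc)
  show ?case
  proof (cases "a = b")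
    case True
    then have "u' \<noteq> v'" using Suc.prems u v by auto
    then have "Cw u' \<inter> Cw v' = {}" using Suc.IH u v by auto
    then show ?thesis using True u v inj_Smap[of b] by (auto simp: Cw_Cons inj_def)
  next
    case False
    have "Cw u' \<subseteq> {0..1}" "Cw v' \<subseteq> {0..1}" using u v Cw_unit by (auto simp: words_def)
    then have cu: "Cw u \<subseteq> Smap a ` {0..1}" and cv: "Cw v \<subseteq> Smap b ` {0..1}"
      using u v by (simp_all add: Cw_Cons image_mono)
    have d: "Smap 0 ` {0..1} \<inter> Smap 2 ` {0..1} = {}" by (auto simp: Smap_def)
    have "(a = 0 \<and> b = 2) \<or> (a = 2 \<and> b = 0)" using False u(2) v(2) by auto
    then show ?thesis using cu cv d by blast
  qed
qed

lemma Cw_cover: "(\<Union>w\<in>words n. Cw w) = cantor"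
proof (induction n)
  case 0 then show ?case by (simp add: words_0 Cw_Nil)
next
  case (Suc n)
  show ?case
  proof
    show "(\<Union>w\<in>words (Suc n). Cw w) \<subseteq> cantor"
    proof
      fix x assume "x \<in> (\<Union>w\<in>words (Suc n). Cw w)"
      then obtain w where w: "w \<in> words (Suc n)" "x \<in> Cw w" by blast
      obtain a v where av: "w = a # v" "a \<in> {0,2}" "v \<in> words n"
        using w(1) by (auto simp: words_Suc)
      then have "x \<in> Smap a ` Cw v" using w by (simp add: Cw_Cons)
      moreover have "Cw v \<subseteq> cantor" using Suc av(3) by blast
      ultimately have "x \<in> Smap a ` cantor" by blast
      then show "x \<in> cantor" using av(2) cantor_self by blast
    qed
    show "cantor \<subseteq> (\<Union>w\<in>words (Suc n). Cw w)"
    proof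
      fix x assume "x \<in> cantor"
      then obtain a y where a: "a \<in> {0,2}" and y: "y \<in> cantor" and x: "x = Smap a y"
        using cantor_self by blast
      then obtain v where v: "v \<in> words n" "y \<in> Cw v" using Suc by blast
      then have "x \<in> Cw (a # v)" using x by (simp add: Cw_Cons)
      moreover have "a # v \<in> words (Suc n)" using Cons_words[OF a v(1)] .
      ultimately show "x \<in> (\<Union>w\<in>words (Suc n). Cw w)" by blast
    qed
  qed
qed

lemma Smap_meas: "Smap a \<in> borel_measurable borel"
  unfolding Smap_def by measurable

lemma Smap_pre: "A \<in> sets borel \<Longrightarrow> Smap a -` A \<in> sets borel"
  using measurable_sets[OF Smap_meas, of A a] by simp

locale cm =
  fixes M :: "real measure"
  assumes prob: "prob_space M"
    and borel: "sets M = sets borel"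
    and unit: "emeasure M {0..1} = 1"
    and selfsim: "\<forall>A\<in>sets borel. emeasure M A =
        emeasure M (Smap 0 -` A) / 2 + emeasure M (Smap 2 -` A) / 2"
begin

sublocale prob_space M by (rule prob)

lemma space_M[simp]: "space M = UNIV"
  using sets_eq_imp_space_eq[OF borel] by simp

lemma sets_M: "A \<in> sets M \<longleftrightarrow> A \<in> sets borel" using borel by simp

lemma selfsim_r:
  assumes A: "A \<in> sets borel"
  shows "measure M A = measure M (Smap 0 -` A) / 2 + measure M (Smap 2 -` A) / 2"
proof -
  define m0 where "m0 = measure M (Smap 0 -` A)"
  define m2 where "m2 = measure M (Smap 2 -` A)"
  have e1: "ennreal (measure M A) = ennreal m0 / 2 + ennreal m2 / 2"
    using selfsim A by (simp add: emeasure_eq_measure m0_def m2_def)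
  have h0: "ennreal m0 / 2 = ennreal (m0/2)" unfolding m0_def
    by (rule ennreal_divide_numeral) (rule measure_nonneg)
  have h2: "ennreal m2 / 2 = ennreal (m2/2)" unfolding m2_def
    by (rule ennreal_divide_numeral) (rule measure_nonneg)
  have "ennreal (measure M A) = ennreal (m0/2 + m2/2)" unfolding e1 h0 h2
    by (rule ennreal_plus[symmetric]) (auto simp: m0_def m2_def)
  then have "measure M A = m0/2 + m2/2"
    by (subst (asm) ennreal_inj) (auto simp: m0_def m2_def)
  then show ?thesis by (simp add: m0_def m2_def)
qed

lemma Tn_meas: "measure M (Tn n) = 1"
proof (induction n)
  case 0
  then show ?case using unit by (simp add: Tn_0 emeasure_eq_measure)
next
  case (Suc n)
  have B: "Tn (Suc n) \<in> sets borel" using compact_Tn by (intro borel_closed compact_imp_closed)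
  have "measure M (Smap a -` Tn (Suc n)) = 1" if a: "a \<in> {0,2}" for a
  proof (rule antisym)
    show "measure M (Smap a -` Tn (Suc n)) \<le> 1" by (rule prob_le_1)
    have "Tn n \<subseteq> Smap a -` Tn (Suc n)" using a by (auto simp: Tn_Suc)
    then have "measure M (Tn n) \<le> measure M (Smap a -` Tn (Suc n))"
      using Smap_pre[OF B] by (intro finite_measure_mono) (auto simp: sets_M)
    then show "1 \<le> measure M (Smap a -` Tn (Suc n))" using Suc by simp
  qed
  then show ?case using selfsim_r[OF B] by simp
qed

lemma cantor_meas: "measure M cantor = 1"
proof -
  have "AE x in M. x \<in> Tn n" for n
  proof -
    have B: "Tn n \<in> sets M" using compact_Tn sets_M by (auto intro: borel_closed compact_imp_closed)
    then show ?thesis using prob_eq_1[OF B] Tn_meas by simp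
  qed
  then have "AE x in M. \<forall>n. x \<in> Tn n" by (simp add: AE_all_countable)
  then have "AE x in M. x \<in> cantor" by (simp add: cantor_eq)
  then show ?thesis using prob_eq_1 borel_cantor sets_M by auto
qed

lemma AE_cantor: "AE x in M. x \<in> cantor"
  using prob_eq_1 borel_cantor sets_M cantor_meas by auto

lemma null_outside:
  assumes "A \<inter> {0..1} = {}" "A \<in> sets borel"
  shows "measure M A = 0"
proof -
  have "measure M (UNIV - {0..1}) = 0"
    using prob_compl[of "{0..1}"] unit by (simp add: sets_M emeasure_eq_measure)
  moreover have "measure M A \<le> measure M (UNIV - {0..1})"
    using assms by (intro finite_measure_mono) (auto simp: sets_M)
  ultimately show ?thesis using measure_nonneg[of M A] by linarith
qed

lemma Cw_meas: "set w \<subseteq> {0,2} \<Longrightarrow> measure M (Cw w) = (1/2) ^ length w"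
proof (induction w)
  case Nil
  then show ?case using cantor_meas by (simp add: Cw_Nil)
next
  case (Cons a w)
  have a: "a \<in> {0,2}" and w: "set w \<subseteq> {0,2}" using Cons.prems by auto
  have U: "Cw w \<subseteq> {0..1}" using Cw_unit[OF w] .
  have B: "Cw (a # w) \<in> sets borel" by (rule borel_Cw)
  have same: "Smap a -` Cw (a # w) = Cw w" by (simp add: Cw_Cons inj_vimage_image_eq inj_Smap)
  have other: "measure M (Smap b -` Cw (a # w)) = 0" if "b \<in> {0,2}" "b \<noteq> a" for b
  proof (rule null_outside)
    show "Smap b -` Cw (a # w) \<in> sets borel" by (rule Smap_pre[OF B])
    show "Smap b -` Cw (a # w) \<inter> {0..1} = {}"
    proof (rule ccontr)
      assume "Smap b -` Cw (a # w) \<inter> {0..1} \<noteq> {}"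
      then obtain y where "y \<in> Smap b -` Cw (a # w) \<inter> {0..1}" by (meson ex_in_conv)
      then have y: "y \<in> {0..1}" and y2: "Smap b y \<in> Cw (a # w)" by simp_all
      then obtain z where z: "z \<in> Cw w" and e: "Smap b y = Smap a z"
        by (auto simp: Cw_Cons)
      have z1: "z \<in> {0..1}" using z U by auto
      show False
      proof (cases "a = 0")
        case True
        then have "b = 2" using that by auto
        then show False using Smap0_unit[OF z1] Smap2_unit[OF y] e True by simp
      next
        case False
        then have "a = 2" "b = 0" using a that by auto
        then show False using Smap0_unit[OF y] Smap2_unit[OF z1] e by simp
      qed
    qed
  qed
  have "measure M (Cw (a # w)) = measure M (Smap 0 -` Cw (a # w)) / 2 + measure M (Smap 2 -` Cw (a # w)) / 2"
    by (rule selfsim_r[OF B])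
  also have "\<dots> = measure M (Cw w) / 2"
    using a same other[of 0] other[of 2] by auto
  finally show ?case using Cons.IH[OF w] by simp
qed

lemma Cw_meas': "w \<in> words n \<Longrightarrow> measure M (Cw w) = (1/2) ^ n"
  using Cw_meas by (auto simp: words_def)

end

lemma sum_single:
  fixes g :: "'a \<Rightarrow> 'b::comm_monoid_add"
  assumes "finite A" "a \<in> A" "\<And>x. x \<in> A \<Longrightarrow> x \<noteq> a \<Longrightarrow> g x = 0"
  shows "sum g A = g a"
proof -
  have "sum g A = g a + sum g (A - {a})" using sum.remove[OF assms(1,2)] .
  moreover have "sum g (A - {a}) = 0" using assms(3) by (intro sum.neutral) auto
  ultimately show ?thesis by simp
qed

context cm begin

lemma space_Fn[simp]: "space (Fn M n) = UNIV"
  by (simp add: Fn_def)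

lemma sets_Fn: "sets (Fn M n) = sigma_sets UNIV (Cw ` words n)"
  by (simp add: Fn_def sets_measure_of)

lemma Cw_Fn: "w \<in> words n \<Longrightarrow> Cw w \<in> sets (Fn M n)"
  by (simp add: sets_Fn)

lemma cantor_Fn: "cantor \<in> sets (Fn M n)"
proof -
  have "(\<Union>w\<in>words n. Cw w) \<in> sets (Fn M n)"
    using finite_words Cw_Fn by (intro sets.finite_UN) auto
  then show ?thesis using Cw_cover by simp
qed

lemma subalg_Fn: "subalgebra M (Fn M n)"
  unfolding subalgebra_def
proof
  show "space (Fn M n) = space M" by simp
  have "sigma_sets (space M) (Cw ` words n) \<subseteq> sets M"
    using borel_Cw sets_M by (intro sets.sigma_sets_subset) auto
  then show "sets (Fn M n) \<subseteq> sets M" by (simp add: sets_Fn)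
qed

lemma sfs_Fn: "sigma_finite_subalgebra M (Fn M n)"
proof (rule finite_measure_subalgebra_is_sigma_finite)
  show "finite_measure_subalgebra M (Fn M n)"
    unfolding finite_measure_subalgebra_def finite_measure_subalgebra_axioms_def
    using subalg_Fn finite_measure_axioms by auto
qed

lemma Fn_Suc: "sets (Fn M n) \<subseteq> sets (Fn M (Suc n))"
  unfolding sets_Fn
proof (rule sigma_sets_mono)
  show "Cw ` words n \<subseteq> sigma_sets UNIV (Cw ` words (Suc n))"
  proof
    fix A assume "A \<in> Cw ` words n"
    then obtain w where w: "w \<in> words n" "A = Cw w" by auto
    have "Cw (w @ [0]) \<in> sigma_sets UNIV (Cw ` words (Suc n))"
      using snoc_words[of 0 w n] w by auto
    moreover have "Cw (w @ [2]) \<in> sigma_sets UNIV (Cw ` words (Suc n))"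
      using snoc_words[of 2 w n] w by auto
    ultimately show "A \<in> sigma_sets UNIV (Cw ` words (Suc n))"
      using w Cw_snoc[of w] by (metis sigma_sets_Un)
  qed
qed

lemma Fn_mono: "k \<le> j \<Longrightarrow> sets (Fn M k) \<subseteq> sets (Fn M j)"
  by (rule lift_Suc_mono_le[of "\<lambda>n. sets (Fn M n)"]) (use Fn_Suc in auto)

lemma subalg_FF: "k \<le> j \<Longrightarrow> subalgebra (Fn M j) (Fn M k)"
  using Fn_mono by (auto simp: subalgebra_def)

lemma atoms:
  assumes "A \<in> sets (Fn M n)" "w \<in> words n"
  shows "Cw w \<subseteq> A \<or> Cw w \<inter> A = {}"
proof -
  have "A \<in> sigma_sets UNIV (Cw ` words n)" using assms(1) by (simp add: sets_Fn)
  then show ?thesis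
  proof (induction rule: sigma_sets.induct)
    case (Basic a)
    then obtain v where v: "v \<in> words n" "a = Cw v" by auto
    then show ?case using Cw_disj[OF assms(2) v(1)] by (cases "v = w") auto
  next
    case (Compl a)
    then show ?case by auto
  next
    case (Union a)
    then show ?case by blast
  qed simp
qed

lemma unique_word:
  assumes "x \<in> cantor"
  shows "\<exists>w0\<in>words n. x \<in> Cw w0 \<and> (\<forall>w\<in>words n. x \<in> Cw w \<longrightarrow> w = w0)"
proof -
  obtain w0 where w0: "w0 \<in> words n" "x \<in> Cw w0" using assms Cw_cover[of n] by auto
  have "\<forall>w\<in>words n. x \<in> Cw w \<longrightarrow> w = w0"
    using Cw_disj[OF _ w0(1)] w0(2) by blast
  then show ?thesis using w0 by blast
qed

lemma ind_split:
  assumes A: "A \<in> sets (Fn M n)"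
  shows "AE x in M. (indicator A x :: real) = (\<Sum>w\<in>{w\<in>words n. Cw w \<subseteq> A}. indicator (Cw w) x)"
  using AE_cantor
proof eventually_elim
  case (elim x)
  obtain w0 where w0: "w0 \<in> words n" "x \<in> Cw w0" "\<forall>w\<in>words n. x \<in> Cw w \<longrightarrow> w = w0"
    using unique_word[OF elim, of n] by blast
  have z: "indicator (Cw w) x = (0::real)" if "w \<in> words n" "w \<noteq> w0" for w
  proof -
    have "x \<notin> Cw w" using w0(3) that by blast
    then show ?thesis by simp
  qed
  have fin: "finite {w\<in>words n. Cw w \<subseteq> A}" using finite_words by simp
  have "(\<Sum>w\<in>{w\<in>words n. Cw w \<subseteq> A}. indicator (Cw w) x :: real)
      = (if Cw w0 \<subseteq> A then 1 else 0)"
  proof (cases "Cw w0 \<subseteq> A")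
    case True
    have "(\<Sum>w\<in>{w\<in>words n. Cw w \<subseteq> A}. indicator (Cw w) x :: real) = indicator (Cw w0) x"
    proof (rule sum_single[OF fin])
      show "w0 \<in> {w\<in>words n. Cw w \<subseteq> A}" using w0(1) True by simp
      fix w assume "w \<in> {w\<in>words n. Cw w \<subseteq> A}" "w \<noteq> w0"
      then show "indicator (Cw w) x = (0::real)" using z by simp
    qed
    then show ?thesis using True w0(2) by simp
  next
    case False
    have "(\<Sum>w\<in>{w\<in>words n. Cw w \<subseteq> A}. indicator (Cw w) x :: real) = 0"
    proof (rule sum.neutral, rule ballI)
      fix w assume w: "w \<in> {w\<in>words n. Cw w \<subseteq> A}"
      then have "w \<noteq> w0" using False by auto
      then show "indicator (Cw w) x = (0::real)" using z w by simp
    qed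
    then show ?thesis using False by simp
  qed
  moreover have "indicator A x = (if Cw w0 \<subseteq> A then 1 else (0::real))"
  proof (cases "Cw w0 \<subseteq> A")
    case True then show ?thesis using w0(2) by auto
  next
    case False
    then have "Cw w0 \<inter> A = {}" using atoms[OF A w0(1)] by blast
    then have "x \<notin> A" using w0(2) by blast
    then show ?thesis using False by simp
  qed
  ultimately show ?case by simp
qed

end

context cm begin

definition Qr :: "nat \<Rightarrow> (real \<Rightarrow> real) \<Rightarrow> real \<Rightarrow> real" where
  "Qr n f x = (\<Sum>w\<in>words n. 2^n * (\<integral>y. indicator (Cw w) y * f y \<partial>M) * indicator (Cw w) x)"

lemma Cw_M: "Cw w \<in> sets M" using borel_Cw sets_M by auto

lemma int_ind: "integrable M h \<Longrightarrow> integrable M (\<lambda>y. indicator (Cw w) y * h y)" for h :: "real \<Rightarrow> real"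
  using integrable_real_mult_indicator[OF Cw_M, of h w] by (simp add: mult.commute)

lemma int_ind_const: "integrable M (\<lambda>y. c * indicator (Cw w) y :: real)"
  using integrable_real_mult_indicator[OF Cw_M, of "\<lambda>_. c" w] by simp

lemma set_int_split:
  fixes h :: "real \<Rightarrow> real"
  assumes h: "integrable M h" and A: "A \<in> sets (Fn M n)"
  shows "(\<integral>x\<in>A. h x \<partial>M) = (\<Sum>w\<in>{w\<in>words n. Cw w \<subseteq> A}. \<integral>y. indicator (Cw w) y * h y \<partial>M)"
proof -
  have AM: "A \<in> sets M" using A subalg_Fn[of n] by (auto simp: subalgebra_def)
  have hm: "h \<in> borel_measurable M" using h by auto
  have "(\<integral>x\<in>A. h x \<partial>M) = (\<integral>x. indicator A x * h x \<partial>M)"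
    by (simp add: set_lebesgue_integral_def)
  also have "\<dots> = (\<integral>x. (\<Sum>w\<in>{w\<in>words n. Cw w \<subseteq> A}. indicator (Cw w) x * h x) \<partial>M)"
  proof (rule integral_cong_AE)
    show "(\<lambda>x. indicator A x * h x) \<in> borel_measurable M" using AM hm by measurable
    show "(\<lambda>x. \<Sum>w\<in>{w\<in>words n. Cw w \<subseteq> A}. indicator (Cw w) x * h x) \<in> borel_measurable M"
      using hm Cw_M by (intro borel_measurable_sum borel_measurable_times borel_measurable_indicator) auto
    show "AE x in M. indicator A x * h x = (\<Sum>w\<in>{w\<in>words n. Cw w \<subseteq> A}. indicator (Cw w) x * h x)"
      using ind_split[OF A] by eventually_elim (simp add: sum_distrib_right)
  qed
  also have "\<dots> = (\<Sum>w\<in>{w\<in>words n. Cw w \<subseteq> A}. \<integral>y. indicator (Cw w) y * h y \<partial>M)"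
    by (rule Bochner_Integration.integral_sum) (rule int_ind[OF h])
  finally show ?thesis .
qed

lemma ind_Q: "w \<in> words n \<Longrightarrow> indicator (Cw w) y * Qr n f y
   = 2^n * (\<integral>y. indicator (Cw w) y * f y \<partial>M) * indicator (Cw w) y"
proof -
  assume w: "w \<in> words n"
  have "indicator (Cw w) y * Qr n f y = (\<Sum>v\<in>words n. indicator (Cw w) y * (2^n * (\<integral>y. indicator (Cw v) y * f y \<partial>M) * indicator (Cw v) y))"
    by (simp add: Qr_def sum_distrib_left)
  also have "\<dots> = indicator (Cw w) y * (2^n * (\<integral>y. indicator (Cw w) y * f y \<partial>M) * indicator (Cw w) y)"
  proof (rule sum_single[OF finite_words w])
    fix v assume "v \<in> words n" "v \<noteq> w"
    then have "Cw w \<inter> Cw v = {}" using Cw_disj w by auto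
    then show "indicator (Cw w) y * (2^n * (\<integral>y. indicator (Cw v) y * f y \<partial>M) * indicator (Cw v) y) = 0"
      by (auto simp: indicator_def)
  qed
  also have "\<dots> = 2^n * (\<integral>y. indicator (Cw w) y * f y \<partial>M) * indicator (Cw w) y"
    by (simp add: indicator_def)
  finally show ?thesis .
qed

lemma int_Q:
  assumes w: "w \<in> words n"
  shows "(\<integral>y. indicator (Cw w) y * Qr n f y \<partial>M) = (\<integral>y. indicator (Cw w) y * f y \<partial>M)"
proof -
  have "(\<integral>y. indicator (Cw w) y * Qr n f y \<partial>M)
     = (\<integral>y. 2^n * (\<integral>y. indicator (Cw w) y * f y \<partial>M) * indicator (Cw w) y \<partial>M)"
    by (rule Bochner_Integration.integral_cong[OF refl], rule ind_Q[OF w])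
  also have "\<dots> = 2^n * (\<integral>y. indicator (Cw w) y * f y \<partial>M) * measure M (Cw w)"
    by (simp add: Cw_M)
  also have "\<dots> = (\<integral>y. indicator (Cw w) y * f y \<partial>M)"
    using Cw_meas'[OF w] by (simp add: power_one_over)
  finally show ?thesis .
qed

lemma Qr_meas: "Qr n f \<in> borel_measurable (Fn M n)"
  unfolding Qr_def
  by (intro borel_measurable_sum borel_measurable_times borel_measurable_const borel_measurable_indicator Cw_Fn)

lemma Qr_int: "integrable M (Qr n f)"
  unfolding Qr_def
proof (rule Bochner_Integration.integrable_sum)
  fix w assume "w \<in> words n"
  show "integrable M (\<lambda>x. 2^n * (\<integral>y. indicator (Cw w) y * f y \<partial>M) * indicator (Cw w) x)"
    using int_ind_const[of "2^n * (\<integral>y. indicator (Cw w) y * f y \<partial>M)" w] by simp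
qed

lemma rce_eq:
  assumes f: "integrable M f"
  shows "AE x in M. real_cond_exp M (Fn M n) f x = Qr n f x"
proof -
  interpret S: sigma_finite_subalgebra M "Fn M n" by (rule sfs_Fn)
  show ?thesis
  proof (rule S.real_cond_exp_charact)
    fix A assume A: "A \<in> sets (Fn M n)"
    show "(\<integral>x\<in>A. f x \<partial>M) = (\<integral>x\<in>A. Qr n f x \<partial>M)"
      using set_int_split[OF f A] set_int_split[OF Qr_int A] int_Q by simp
  qed (use f Qr_int Qr_meas in auto)
qed

end

lemma ind_c: "(indicator A x :: complex) = complex_of_real (indicator A x)"
  by (simp add: indicator_def)

lemma cnj_ind: "cnj (indicator A x :: complex) * z = indicator A x *\<^sub>R z"
  by (simp add: indicator_def)

context cm begin

definition Pc :: "nat \<Rightarrow> (real \<Rightarrow> complex) \<Rightarrow> real \<Rightarrow> complex" where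
  "Pc n f x = (\<Sum>w\<in>words n. 2^n * inner_mu M (\<lambda>y. indicator (Cw w) y) f * indicator (Cw w) x)"

lemma inner_ind:
  assumes f: "integrable M f"
  shows "Re (inner_mu M (\<lambda>y. indicator (Cw w) y) f) = (\<integral>y. indicator (Cw w) y * Re (f y) \<partial>M)"
    and "Im (inner_mu M (\<lambda>y. indicator (Cw w) y) f) = (\<integral>y. indicator (Cw w) y * Im (f y) \<partial>M)"
proof -
  have eq: "inner_mu M (\<lambda>y. indicator (Cw w) y) f = (\<integral>y. indicator (Cw w) y *\<^sub>R f y \<partial>M)"
    by (simp add: inner_mu_def cnj_ind)
  have i: "integrable M (\<lambda>y. indicator (Cw w) y *\<^sub>R f y)"
    by (rule integrable_mult_indicator[OF Cw_M f])
  show "Re (inner_mu M (\<lambda>y. indicator (Cw w) y) f) = (\<integral>y. indicator (Cw w) y * Re (f y) \<partial>M)"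
    unfolding eq using integral_Re[OF i] by simp
  show "Im (inner_mu M (\<lambda>y. indicator (Cw w) y) f) = (\<integral>y. indicator (Cw w) y * Im (f y) \<partial>M)"
    unfolding eq using integral_Im[OF i] by simp
qed

lemma En_eq:
  assumes f: "integrable M f"
  shows "AE x in M. En M n f x = Pc n f x"
proof -
  have "AE x in M. real_cond_exp M (Fn M n) (\<lambda>y. Re (f y)) x = Qr n (\<lambda>y. Re (f y)) x"
    using f by (intro rce_eq) auto
  moreover have "AE x in M. real_cond_exp M (Fn M n) (\<lambda>y. Im (f y)) x = Qr n (\<lambda>y. Im (f y)) x"
    using f by (intro rce_eq) auto
  ultimately show ?thesis
  proof eventually_elim
    case (elim x)
    show ?case
    proof (rule complex_eqI)
      show "Re (En M n f x) = Re (Pc n f x)"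
        using elim inner_ind[OF f] by (simp add: En_def Pc_def Qr_def ind_c)
      show "Im (En M n f x) = Im (Pc n f x)"
        using elim inner_ind[OF f] by (simp add: En_def Pc_def Qr_def ind_c)
    qed
  qed
qed

lemma words_disj: "i \<noteq> j \<Longrightarrow> words i \<inter> words j = {}"
  by (auto simp: words_def)

lemma Kop_eq: "Kop M m f x = (\<Sum>k\<le>m. complex_of_real ((1/2)^k) * Pc k f x)"
proof -
  have "Kop M m f x = (\<Sum>k\<le>m. \<Sum>u\<in>words k. inner_mu M (\<lambda>y. indicator (Cw u) y) f * indicator (Cw u) x)"
    unfolding Kop_def
    by (rule sum.UNION_disjoint) (simp_all add: finite_words words_disj)
  also have "\<dots> = (\<Sum>k\<le>m. complex_of_real ((1/2)^k) * Pc k f x)"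
  proof (rule sum.cong[OF refl])
    fix k
    have "complex_of_real ((1/2)^k) * 2^k = 1"
      by (simp add: power_mult_distrib[symmetric])
    then show "(\<Sum>u\<in>words k. inner_mu M (\<lambda>y. indicator (Cw u) y) f * indicator (Cw u) x)
      = complex_of_real ((1/2)^k) * Pc k f x"
      unfolding Pc_def sum_distrib_left
      by (intro sum.cong refl) (simp add: mult.assoc[symmetric])
  qed
  finally show ?thesis .
qed

end

lemma lam_sum: "lam n m = (\<Sum>k\<le>m. if n \<le> k then (1/2)^k else (0::real))"
proof (induction m)
  case 0 then show ?case by (simp add: lam_def)
next
  case (Suc m)
  have "lam n (Suc m) = lam n m + (if n \<le> Suc m then (1/2)^(Suc m) else 0)"
  proof (cases "n = 0")
    case True then show ?thesis by (simp add: lam_def)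
  next
    case False
    then obtain i where i: "n = Suc i" by (cases n) auto
    show ?thesis
    proof (cases "n \<le> m")
      case True
      then have im: "i < m" using i by simp
      have e1: "Suc m - n + 1 = Suc (m - i)" using im i by simp
      have e2: "m - n + 1 = m - i" using im i by simp
      have p: "((1::real)/2)^i * (1/2)^(m - i) = (1/2)^m"
        using im by (simp add: power_add[symmetric])
      have "lam n (Suc m) = (1/2)^i * (1 - (1/2)^(Suc (m - i)))"
        using True i e1 by (simp add: lam_def)
      also have "\<dots> = (1/2)^i * (1 - (1/2)^(m - i)) + (1/2)^i * (1/2)^(m - i) / 2"
        by (simp add: algebra_simps)
      also have "\<dots> = lam n m + (1/2)^(Suc m)"
        using True i e2 p by (simp add: lam_def)
      finally show ?thesis using True by simp
    next
      case nm: False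
      show ?thesis
      proof (cases "n = Suc m")
        case True then show ?thesis using i by (simp add: lam_def)
      next
        case False then show ?thesis using nm i by (simp add: lam_def)
      qed
    qed
  qed
  then show ?case using Suc by simp
qed

lemma telesc:
  fixes e :: "nat \<Rightarrow> complex"
  shows "e k = (\<Sum>n\<le>k. if n = 0 then e 0 else e n - e (n - 1))"
  by (induction k) auto

lemma coef_identity:
  fixes e :: "nat \<Rightarrow> complex"
  defines "d \<equiv> \<lambda>n. if n = 0 then e 0 else e n - e (n - 1)"
  shows "(\<Sum>k\<le>m. complex_of_real ((1/2)^k) * e k) = (\<Sum>n\<le>m. complex_of_real (lam n m) * d n)"
proof -
  have "(\<Sum>k\<le>m. complex_of_real ((1/2)^k) * e k)
      = (\<Sum>k\<le>m. \<Sum>n\<le>m. complex_of_real (if n \<le> k then (1/2)^k else 0) * d n)"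
  proof (rule sum.cong[OF refl])
    fix k assume k: "k \<in> {..m}"
    have "e k = (\<Sum>n\<le>k. d n)" unfolding d_def by (rule telesc)
    also have "\<dots> = (\<Sum>n\<le>m. if n \<le> k then d n else 0)"
      using k by (intro sum.mono_neutral_cong_left) auto
    finally have ek: "e k = (\<Sum>n\<le>m. if n \<le> k then d n else 0)" .
    show "complex_of_real ((1/2)^k) * e k
        = (\<Sum>n\<le>m. complex_of_real (if n \<le> k then (1/2)^k else 0) * d n)"
      unfolding ek sum_distrib_left by (intro sum.cong refl) simp
  qed
  also have "\<dots> = (\<Sum>n\<le>m. \<Sum>k\<le>m. complex_of_real (if n \<le> k then (1/2)^k else 0) * d n)"
    by (rule sum.swap)
  also have "\<dots> = (\<Sum>n\<le>m. complex_of_real (lam n m) * d n)"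
    by (simp add: lam_sum sum_distrib_right[symmetric] of_real_sum)
  finally show ?thesis .
qed

lemma dn_apply: "dn M n f x = (if n = 0 then En M 0 f x else En M n f x - En M (n - 1) f x)"
  by (simp add: dn_def)

context cm begin

lemma rtower:
  assumes u: "integrable M u"
  shows "AE x in M. real_cond_exp M (Fn M k) (real_cond_exp M (Fn M j) u) x
                  = real_cond_exp M (Fn M (min k j)) u x"
proof -
  interpret Sk: sigma_finite_subalgebra M "Fn M k" by (rule sfs_Fn)
  interpret Sj: sigma_finite_subalgebra M "Fn M j" by (rule sfs_Fn)
  show ?thesis
  proof (cases "k \<le> j")
    case True
    have "min k j = k" using True by simp
    then show ?thesis
      using Sk.real_cond_exp_nested_subalg[OF subalg_Fn[of j] subalg_FF[OF True] u] by simp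
  next
    case False
    then have jk: "j \<le> k" by simp
    have "AE x in M. real_cond_exp M (Fn M k) (real_cond_exp M (Fn M j) u) x = real_cond_exp M (Fn M j) u x"
    proof (rule Sk.real_cond_exp_F_meas)
      show "integrable M (real_cond_exp M (Fn M j) u)" by (rule Sj.real_cond_exp_int(1)[OF u])
      show "real_cond_exp M (Fn M j) u \<in> borel_measurable (Fn M k)"
        by (rule measurable_from_subalg[OF subalg_FF[OF jk]]) simp
    qed
    moreover have "min k j = j" using jk by simp
    ultimately show ?thesis by simp
  qed
qed

lemma Re_En: "(\<lambda>y. Re (En M j g y)) = real_cond_exp M (Fn M j) (\<lambda>y. Re (g y))"
  by (simp add: En_def fun_eq_iff)

lemma Im_En: "(\<lambda>y. Im (En M j g y)) = real_cond_exp M (Fn M j) (\<lambda>y. Im (g y))"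
  by (simp add: En_def fun_eq_iff)

lemma ctower:
  assumes g: "integrable M g"
  shows "AE x in M. En M k (En M j g) x = En M (min k j) g x"
proof -
  have "AE x in M. real_cond_exp M (Fn M k) (real_cond_exp M (Fn M j) (\<lambda>y. Re (g y))) x
                  = real_cond_exp M (Fn M (min k j)) (\<lambda>y. Re (g y)) x"
    using g by (intro rtower) auto
  moreover have "AE x in M. real_cond_exp M (Fn M k) (real_cond_exp M (Fn M j) (\<lambda>y. Im (g y))) x
                  = real_cond_exp M (Fn M (min k j)) (\<lambda>y. Im (g y)) x"
    using g by (intro rtower) auto
  ultimately show ?thesis
  proof eventually_elim
    case (elim x)
    then show ?case
      by (simp add: En_def[of M k "En M j g"] Re_En Im_En) (simp add: En_def)
  qed
qed

lemma En_int:
  assumes g: "integrable M g"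
  shows "integrable M (En M k g)"
proof -
  interpret Sk: sigma_finite_subalgebra M "Fn M k" by (rule sfs_Fn)
  have a: "integrable M (real_cond_exp M (Fn M k) (\<lambda>y. Re (g y)))"
    using g by (intro Sk.real_cond_exp_int(1)) auto
  have b: "integrable M (real_cond_exp M (Fn M k) (\<lambda>y. Im (g y)))"
    using g by (intro Sk.real_cond_exp_int(1)) auto
  show ?thesis unfolding En_def
    using a b by (intro Bochner_Integration.integrable_add integrable_mult_right integrable_of_real)
qed

lemma En_diff:
  assumes a: "integrable M a" and b: "integrable M b"
  shows "AE x in M. En M k (\<lambda>x. a x - b x) x = En M k a x - En M k b x"
proof -
  interpret Sk: sigma_finite_subalgebra M "Fn M k" by (rule sfs_Fn)
  have "AE x in M. real_cond_exp M (Fn M k) (\<lambda>x. Re (a x) - Re (b x)) x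
     = real_cond_exp M (Fn M k) (\<lambda>x. Re (a x)) x - real_cond_exp M (Fn M k) (\<lambda>x. Re (b x)) x"
    using a b by (intro Sk.real_cond_exp_diff) auto
  moreover have "AE x in M. real_cond_exp M (Fn M k) (\<lambda>x. Im (a x) - Im (b x)) x
     = real_cond_exp M (Fn M k) (\<lambda>x. Im (a x)) x - real_cond_exp M (Fn M k) (\<lambda>x. Im (b x)) x"
    using a b by (intro Sk.real_cond_exp_diff) auto
  ultimately show ?thesis
  proof eventually_elim
    case (elim x)
    then show ?case by (intro complex_eqI) (simp_all add: En_def)
  qed
qed

lemma L2_int: "f \<in> L2 M \<Longrightarrow> integrable M f"
proof -
  assume "f \<in> L2 M"
  then have fm: "f \<in> borel_measurable M" and f2: "integrable M (\<lambda>x. (cmod (f x))\<^sup>2)"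
    by (auto simp: L2_def)
  have b: "norm (f x) \<le> norm (1 + (cmod (f x))\<^sup>2)" for x
  proof -
    have c: "cmod (f x) \<le> 1 + (cmod (f x))\<^sup>2"
    proof (cases "cmod (f x) \<le> 1")
      case True then show ?thesis by (simp add: add_increasing2)
    next
      case False
      then have "cmod (f x) * 1 \<le> cmod (f x) * cmod (f x)"
        by (intro mult_left_mono) auto
      then show ?thesis by (simp add: power2_eq_square)
    qed
    then show ?thesis by simp
  qed
  have i1: "integrable M (\<lambda>x. 1 + (cmod (f x))\<^sup>2)" using f2 by simp
  show "integrable M f"
    by (rule Bochner_Integration.integrable_bound[OF i1 fm]) (rule AE_I2, rule b)
qed

lemma Edn:
  assumes g: "integrable M g"
  shows "AE x in M. En M k (dn M n g) x = (if n \<le> k then dn M n g x else 0)"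
proof (cases "n = 0")
  case True
  then show ?thesis using ctower[OF g, of k 0] by (simp add: dn_def)
next
  case False
  have "AE x in M. En M k (\<lambda>x. En M n g x - En M (n - 1) g x) x = En M k (En M n g) x - En M k (En M (n-1) g) x"
    using En_int[OF g] by (intro En_diff) auto
  moreover note ctower[OF g, of k n] ctower[OF g, of k "n - 1"]
  ultimately show ?thesis
  proof eventually_elim
    case (elim x)
    then show ?case using False by (auto simp: dn_def min_def)
  qed
qed

lemma part1: "f \<in> L2 M \<Longrightarrow> AE x in M.
        Kop M m f x = complex_of_real (2 - (1/2)^m) * dn M 0 f x
          + (\<Sum>n=1..m. complex_of_real ((1/2)^(n-1) * (1 - (1/2)^(m-n+1))) * dn M n f x)"
proof -
  assume "f \<in> L2 M"
  then have f: "integrable M f" by (rule L2_int)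
  have "AE x in M. \<forall>k\<in>{..m}. En M k f x = Pc k f x"
    using En_eq[OF f] by (intro AE_finite_allI) auto
  then show ?thesis
  proof eventually_elim
    case (elim x)
    have "Kop M m f x = (\<Sum>k\<le>m. complex_of_real ((1/2)^k) * En M k f x)"
      using elim by (simp add: Kop_eq)
    also have "\<dots> = (\<Sum>n\<le>m. complex_of_real (lam n m) * dn M n f x)"
      by (subst coef_identity) (simp add: dn_apply)
    also have "\<dots> = complex_of_real (lam 0 m) * dn M 0 f x + (\<Sum>n=1..m. complex_of_real (lam n m) * dn M n f x)"
      by (simp add: atMost_atLeast0 sum.atLeast_Suc_atMost)
    also have "\<dots> = complex_of_real (2 - (1/2)^m) * dn M 0 f x
          + (\<Sum>n=1..m. complex_of_real ((1/2)^(n-1) * (1 - (1/2)^(m-n+1))) * dn M n f x)"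
      by (intro arg_cong2[where f="(+)"] sum.cong refl) (auto simp: lam_def)
    finally show ?case .
  qed
qed

lemma part2: "f \<in> L2 M \<Longrightarrow> \<exists>c. AE x in M. En M 0 f x = c * phi x"
proof -
  assume "f \<in> L2 M"
  then have f: "integrable M f" by (rule L2_int)
  show ?thesis
    using En_eq[OF f, of 0] by (intro exI[of _ "inner_mu M (\<lambda>y. indicator cantor y) f"])
       (simp add: Pc_def words_0 Cw_Nil phi_def)
qed

lemma part3: "AE x in M. En M 0 phi x = phi x"
proof -
  have pi: "integrable M phi"
    using int_ind_const[of 1 "[]"] unfolding phi_def by (simp add: Cw_Nil ind_c)
  have "inner_mu M (\<lambda>y. indicator cantor y) phi = 1"
  proof -
    have "inner_mu M (\<lambda>y. indicator cantor y) phi = (\<integral>y. complex_of_real (indicator cantor y) \<partial>M)"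
      unfolding inner_mu_def phi_def by (intro Bochner_Integration.integral_cong refl) (simp add: indicator_def)
    also have "\<dots> = 1" using cantor_meas by (simp add: borel_cantor sets_M)
    finally show ?thesis .
  qed
  then show ?thesis
    using En_eq[OF pi, of 0] by (simp add: Pc_def words_0 Cw_Nil phi_def)
qed

lemma part4: "g \<in> L2 M \<Longrightarrow> AE x in M.
        Kop M m (dn M n g) x = complex_of_real (lam n m) * dn M n g x"
proof -
  assume "g \<in> L2 M"
  then have g: "integrable M g" by (rule L2_int)
  have h: "integrable M (dn M n g)"
    using En_int[OF g] by (auto simp: dn_def)
  have "AE x in M. \<forall>k\<in>{..m}. En M k (dn M n g) x = Pc k (dn M n g) x"
    using En_eq[OF h] by (intro AE_finite_allI) auto
  moreover have "AE x in M. \<forall>k\<in>{..m}. En M k (dn M n g) x = (if n \<le> k then dn M n g x else 0)"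
    using Edn[OF g] by (intro AE_finite_allI) auto
  ultimately show ?thesis
  proof eventually_elim
    case (elim x)
    have "Kop M m (dn M n g) x = (\<Sum>k\<le>m. complex_of_real ((1/2)^k) * (if n \<le> k then dn M n g x else 0))"
      using elim by (simp add: Kop_eq)
    also have "\<dots> = (\<Sum>k\<le>m. complex_of_real (if n \<le> k then (1/2)^k else 0)) * dn M n g x"
      unfolding sum_distrib_right by (intro sum.cong refl) simp
    also have "\<dots> = complex_of_real (lam n m) * dn M n g x"
      by (simp add: lam_sum of_real_sum)
    finally show ?case .
  qed
qed

end

theorem proposition3p4:
  fixes M :: "real measure"
  assumes prob: "prob_space M"
    and borel: "sets M = sets borel"
    and unit: "emeasure M {0..1} = 1"
    and selfsim: "\<forall>A\<in>sets borel. emeasure M A =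
        emeasure M (Smap 0 -` A) / 2 + emeasure M (Smap 2 -` A) / 2"
  shows
    "(\<forall>m. \<forall>f\<in>L2 M. AE x in M.
        Kop M m f x = complex_of_real (2 - (1/2)^m) * dn M 0 f x
          + (\<Sum>n=1..m. complex_of_real ((1/2)^(n-1) * (1 - (1/2)^(m-n+1))) * dn M n f x))
   \<and> (\<forall>f\<in>L2 M. \<exists>c. AE x in M. En M 0 f x = c * phi x)
   \<and> (AE x in M. En M 0 phi x = phi x)
   \<and> (\<forall>m n. \<forall>g\<in>L2 M. AE x in M.
        Kop M m (dn M n g) x = complex_of_real (lam n m) * dn M n g x)"
proof -
  interpret cm M using prob borel unit selfsim by (rule cm.intro)
  show ?thesis using part1 part2 part3 part4 by blast
qed

end
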